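(* (1) Let $A\in\mathrm{SL}(2,\mathbb R)$ be such that $A\Lambda_q$ contains a horizontal vector $(c,0)^T$ with $0<c\le1$. Then there is a unique point $(a_A,b_A)\in\mathscr T^q$ with $A\Lambda_q=g_{a_A,b_A}\Lambda_q$, and $a_A=c$. (Uniqueness: if $(a,b),(c',d)\in\mathscr T^q$ and $g_{a,b}\Lambda_q=g_{c',d}\Lambda_q$ then $(a,b)=(c',d)$.) (2) For every $(a,b)\in\mathscr T^q$, the set $g_{a,b}\Lambda_q\cap S_1$ is nonempty and contains a vector of smallest positive slope; let $R_q(a,b)>0$ denote this slope. Then $R_q(a,b)$ is the smallest $s>0$ such that $h_sg_{a,b}\Lambda_q$ contains a horizontal vector of length at most $1$, so by (1) there is a unique point $\mathrm{BCZ}_q(a,b)\in\mathscr T^q$ with $h_{R_q(a,b)}g_{a,b}\Lambda_q=g_{\mathrm{BCZ}_q(a,b)}\Lambda_q$. (3) The sets $\mathscr T_i^q=\{(a,b)\in\mathscr T^q:(a,b)^T\cdot\mathfrak w_{i-1}^q>1,\ (a,b)^T\cdot\mathfrak w_i^q\le1\}$, $i=2,3,\dots,q-1$, form a partition of $\mathscr T^q$. If $(a,b)\in\mathscr T_i^q$, then $g_{a,b}\mathfrak w_i^q$ is the vector of least positive slope in $g_{a,b}\Lambda_q\cap S_1$, $$R_q(a,b)=\frac{y_i^q}{a\,\big((a,b)^T\cdot\mathfrak w_i^q\big)},$$ and $$\mathrm{BCZ}_q(a,b)=\Big((a,b)^T\cdot\mathfrak w_i^q,\ (a,b)^T\cdot\mathfrak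 w_{i+1}^q+k_i^q(a,b)\,\lambda_q\,(a,b)^T\cdot\mathfrak w_i^q\Big),\quad k_i^q(a,b)=\left\lfloor\frac{1-(a,b)^T\cdot\mathfrak w_{i+1}^q}{\lambda_q\,(a,b)^T\cdot\mathfrak w_i^q}\right\rfloor.$$
   Context: Fix an integer $q\ge3$, let $\lambda_q=2\cos(\pi/q)$, and let $G_q\subset \mathrm{SL}(2,\mathbb R)$ be the Hecke triangle group generated by $S=\begin{pmatrix}0&-1\\1&0\end{pmatrix}$ and $T_q=\begin{pmatrix}1&\lambda_q\\0&1\end{pmatrix}$, acting linearly on $\mathbb R^2$. Set $\Lambda_q=G_q(1,0)^T$ and $A\Lambda_q=\{A\mathbf v:\mathbf v\in\Lambda_q\}$. Let $U_q=T_qS=\begin{pmatrix}\lambda_q&-1\\1&0\end{pmatrix}$ and $\mathfrak w_i^q=(x_i^q,y_i^q)^T=U_q^i(1,0)^T$. The dot product is the standard one. Matrices: $h_s=\begin{pmatrix}1&0\\-s&1\end{pmatrix}$ ($s\in\mathbb R$), $g_{a,b}=\begin{pmatrix}a&b\\0&a^{-1}\end{pmatrix}$ ($a>0,b\in\mathbb R$); for $(a,b)$ a point, $g_{(a,b)}$ means $g_{a,b}$. For $\tau>0$, $S_\tau=\{(x,y)^T\in\mathbb R^2:0<x\le\tau\}$ is the vertical strip. The slope of $(x,y)^T$ with $x\ne0$ is $y/x$. The $G_q$-Farey triangle is $\mathscr T^q=\{(a,b)\in\mathbb R^2:0<a\le1,\ 1-\lambda_qa<b\le1\}$. *)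

theory Defs
  imports "HOL-Analysis.Analysis"
begin

text \<open>2x2 real matrices (rows given) and vectors in R^2.\<close>
definition mat2 :: "real \<Rightarrow> real \<Rightarrow> real \<Rightarrow> real \<Rightarrow> real^2^2" where
  "mat2 a b c d = vector [vector [a, b], vector [c, d]]"

definition vec2 :: "real \<Rightarrow> real \<Rightarrow> real^2" where
  "vec2 x y = vector [x, y]"

definition lam :: "nat \<Rightarrow> real" where
  "lam q = 2 * cos (pi / real q)"

definition Smat :: "real^2^2" where
  "Smat = mat2 0 (-1) 1 0"

definition Tmat :: "nat \<Rightarrow> real^2^2" where
  "Tmat q = mat2 1 (lam q) 0 1"

text \<open>The Hecke triangle group G_q: the group generated by S and T_q
  (closure of the identity under right multiplication by generators and their inverses).\<close>
inductive_set Hecke :: "nat \<Rightarrow> (real^2^2) set" for q :: nat where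
  id: "mat 1 \<in> Hecke q"
| S: "A \<in> Hecke q \<Longrightarrow> A ** Smat \<in> Hecke q"
| Sinv: "A \<in> Hecke q \<Longrightarrow> A ** matrix_inv Smat \<in> Hecke q"
| T: "A \<in> Hecke q \<Longrightarrow> A ** Tmat q \<in> Hecke q"
| Tinv: "A \<in> Hecke q \<Longrightarrow> A ** matrix_inv (Tmat q) \<in> Hecke q"

definition Lam :: "nat \<Rightarrow> (real^2) set" where
  "Lam q = {A *v vec2 1 0 | A. A \<in> Hecke q}"

definition act :: "real^2^2 \<Rightarrow> (real^2) set \<Rightarrow> (real^2) set" where
  "act A L = (\<lambda>v. A *v v) ` L"

definition Umat :: "nat \<Rightarrow> real^2^2" where
  "Umat q = mat2 (lam q) (-1) 1 0"

primrec wv :: "nat \<Rightarrow> nat \<Rightarrow> real^2" where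
  "wv q 0 = vec2 1 0"
| "wv q (Suc i) = Umat q *v wv q i"

definition hmat :: "real \<Rightarrow> real^2^2" where
  "hmat s = mat2 1 0 (-s) 1"

definition gmat :: "real \<Rightarrow> real \<Rightarrow> real^2^2" where
  "gmat a b = mat2 a b 0 (1 / a)"

definition gpt :: "real \<times> real \<Rightarrow> real^2^2" where
  "gpt p = gmat (fst p) (snd p)"

definition strip :: "real \<Rightarrow> (real^2) set" where
  "strip \<tau> = {v. 0 < v $ 1 \<and> v $ 1 \<le> \<tau>}"

definition slope :: "real^2 \<Rightarrow> real" where
  "slope v = v $ 2 / v $ 1"

definition Farey :: "nat \<Rightarrow> (real \<times> real) set" where
  "Farey q = {(a, b). 0 < a \<and> a \<le> 1 \<and> 1 - lam q * a < b \<and> b \<le> 1}"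

definition pdot :: "real \<times> real \<Rightarrow> real^2 \<Rightarrow> real" where
  "pdot p w = vec2 (fst p) (snd p) \<bullet> w"

text \<open>R_q(a,b): the least positive slope of vectors in g_{a,b} Lambda_q within S_1.\<close>
definition Rq :: "nat \<Rightarrow> real \<times> real \<Rightarrow> real" where
  "Rq q p = (LEAST s. \<exists>v \<in> act (gpt p) (Lam q) \<inter> strip 1. slope v = s \<and> 0 < s)"

definition BCZ :: "nat \<Rightarrow> real \<times> real \<Rightarrow> real \<times> real" where
  "BCZ q p = (THE p'. p' \<in> Farey q \<and>
      act (hmat (Rq q p) ** gpt p) (Lam q) = act (gpt p') (Lam q))"

definition Tpiece :: "nat \<Rightarrow> nat \<Rightarrow> (real \<times> real) set" where
  "Tpiece q i = {p \<in> Farey q. pdot p (wv q (i - 1)) > 1 \<and> pdot p (wv q i) \<le> 1}"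

definition kq :: "nat \<Rightarrow> nat \<Rightarrow> real \<times> real \<Rightarrow> int" where
  "kq q i p = \<lfloor>(1 - pdot p (wv q (i + 1))) / (lam q * pdot p (wv q i))\<rfloor>"

end

theory Submission
  imports Defs
begin

lemma vec2_nth[simp]: "vec2 x y $ 1 = x" "vec2 x y $ 2 = y"
  by (simp_all add: vec2_def)

lemma vec2_eta: "v = vec2 (v$1) (v$2)"
  by (simp add: vec_eq_iff forall_2)

lemma vec2_eq_iff: "vec2 a b = vec2 c d \<longleftrightarrow> a = c \<and> b = d"
  by (simp add: vec_eq_iff forall_2)

lemma mat2_nth[simp]: "mat2 a b c d $ 1 $ 1 = a" "mat2 a b c d $ 1 $ 2 = b"
  "mat2 a b c d $ 2 $ 1 = c" "mat2 a b c d $ 2 $ 2 = d"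
  by (simp_all add: mat2_def)

lemma mat2_eta: "A = mat2 (A$1$1) (A$1$2) (A$2$1) (A$2$2)"
  by (simp add: vec_eq_iff forall_2)

lemma mat2_mulv[simp]: "mat2 a b c d *v vec2 x y = vec2 (a*x+b*y) (c*x+d*y)"
  by (simp add: vec_eq_iff forall_2 matrix_vector_mult_def sum_2)

lemma mat2_mul[simp]: "mat2 a b c d ** mat2 e f g h = mat2 (a*e+b*g) (a*f+b*h) (c*e+d*g) (c*f+d*h)"
  by (simp add: vec_eq_iff forall_2 matrix_matrix_mult_def sum_2)

lemma mat1_2: "(mat 1 :: real^2^2) = mat2 1 0 0 1"
  by (simp add: vec_eq_iff forall_2 mat_def)

lemma det_mat2[simp]: "det (mat2 a b c d) = a*d - b*c"
  by (simp add: det_2)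

lemma mat2_eq_iff: "mat2 a b c d = mat2 a' b' c' d' \<longleftrightarrow> a=a' \<and> b=b' \<and> c=c' \<and> d=d'"
  by (metis mat2_nth)

lemma inner_vec2[simp]: "vec2 a b \<bullet> vec2 x y = a*x+b*y"
  by (simp add: inner_vec_def sum_2)

lemma norm_vec2: "norm (vec2 x y) = sqrt (x^2+y^2)"
  by (simp add: norm_vec_def L2_set_def sum_2)

lemma matrix_inv_eq: fixes A B :: "real^2^2"
  assumes "A ** B = mat 1" "B ** A = mat 1" shows "matrix_inv A = B"
proof -
  let ?C = "matrix_inv A"
  have "A ** ?C = mat 1 \<and> ?C ** A = mat 1"
    unfolding matrix_inv_def by (rule someI[of _ B]) (use assms in auto)
  then have "?C = ?C ** (A ** B)" using assms by simp
  also have "\<dots> = (?C ** A) ** B" by (simp add: matrix_mul_assoc)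
  also have "\<dots> = B" using \<open>A ** ?C = mat 1 \<and> ?C ** A = mat 1\<close> by simp
  finally show ?thesis .
qed



fun useq :: "nat \<Rightarrow> nat \<Rightarrow> real" where
  "useq q 0 = 0" | "useq q (Suc 0) = 1"
| "useq q (Suc (Suc n)) = lam q * useq q (Suc n) - useq q n"

lemma useq_rec: "useq q (n+2) = lam q * useq q (n+1) - useq q n"
  by (simp add: numeral_2_eq_2)

lemma cassini: "(useq q (n+1))^2 - useq q n * useq q (n+2) = 1"
proof (induction n)
  case 0 thus ?case by (simp add: numeral_2_eq_2)
next
  case (Suc n)
  have "useq q (Suc n + 2) = lam q * useq q (n+2) - useq q (n+1)"
    using useq_rec[of q "Suc n"] by simp
  then show ?case using Suc useq_rec[of q n] by (simp add: power2_eq_square algebra_simps)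
qed

lemma lam_bounds: assumes "q \<ge> 3" shows "1 \<le> lam q" "lam q < 2"
proof -
  have q0: "real q \<ge> 3" using assms by simp
  have p0: "0 < pi / real q" using q0 by simp
  have p1: "pi / real q \<le> pi / 3" using q0 by (intro divide_left_mono) auto
  have "cos (pi/3) \<le> cos (pi / real q)"
  proof (rule cos_monotone_0_pi_le)
    show "0 \<le> pi / real q" using p0 by linarith
    show "pi / real q \<le> pi / 3" by (rule p1)
    show "pi / 3 \<le> pi" using pi_gt_zero by linarith
  qed
  then show "1 \<le> lam q" by (simp add: lam_def cos_60)
  have "cos (pi / real q) < cos 0"
  proof (rule cos_monotone_0_pi)
    show "pi / real q \<le> pi" using p1 pi_gt_zero by linarith
  qed (use p0 in auto)
  then show "lam q < 2" by (simp add: lam_def)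
qed

lemma sin_theta_pos: assumes "q \<ge> 3" shows "0 < sin (pi / real q)"
proof -
  have q0: "real q \<ge> 3" using assms by simp
  show ?thesis using q0 by (intro sin_gt_zero) (auto simp: divide_less_eq)
qed

lemma useq_sin: assumes "q \<ge> 3"
  shows "useq q n * sin (pi / real q) = sin (real n * (pi / real q))"
proof -
  define t where "t = pi / real q"
  have key: "sin ((x + 1) * t) + sin ((x - 1) * t) = 2 * cos t * sin (x * t)" for x
    by (simp add: algebra_simps sin_add sin_diff)
  have "useq q n * sin t = sin (real n * t) \<and> useq q (Suc n) * sin t = sin (real (Suc n) * t)"
  proof (induction n)
    case 0 thus ?case by simp
  next
    case (Suc n)
    have "useq q (Suc (Suc n)) * sin t = 2 * cos t * sin (real (Suc n) * t) - sin (real n * t)"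
      using Suc by (simp add: lam_def t_def[symmetric] algebra_simps)
    also have "\<dots> = sin (real (Suc (Suc n)) * t)"
      using key[of "real (Suc n)"] by (simp add: algebra_simps)
    finally show ?case using Suc by simp
  qed
  then show ?thesis by (simp add: t_def)
qed



locale hq = fixes q :: nat assumes q3: "q \<ge> 3"
begin

abbreviation "u \<equiv> useq q"
abbreviation "lm \<equiv> lam q"

lemma lam1: "1 \<le> lm" and lam2: "lm < 2" using lam_bounds q3 by auto

lemma st: "0 < sin (pi / real q)" using sin_theta_pos q3 .

lemma usin: "u n * sin (pi / real q) = sin (real n * (pi / real q))" using useq_sin q3 .

lemma u_q: "u q = 0"
proof -
  have "u q * sin (pi / real q) = 0" using usin[of q] q3 by simp
  thus ?thesis using st by simp
qed

lemma u_qm1: "u (q-1) = 1"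
proof -
  have "real (q-1) * (pi / real q) = pi - pi / real q" using q3 by (simp add: of_nat_diff field_simps)
  hence "u (q-1) * sin (pi / real q) = sin (pi / real q)" using usin[of "q-1"] by simp
  thus ?thesis using st by simp
qed

lemma u_qp1: "u (q+1) = -1"
proof -
  have "real (q+1) * (pi / real q) = pi / real q + pi" using q3 by (simp add: field_simps)
  hence "u (q+1) * sin (pi / real q) = - sin (pi / real q)" using usin[of "q+1"] by simp
  hence "(u (q+1) + 1) * sin (pi / real q) = 0" by (simp add: algebra_simps)
  thus ?thesis using st by simp
qed

lemma u_nonneg: "k \<le> q \<Longrightarrow> 0 \<le> u k"
proof -
  assume k: "k \<le> q"
  have "0 \<le> sin (real k * (pi / real q))"
    using k q3 by (intro sin_ge_zero) (auto simp: field_simps)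
  hence "0 \<le> u k * sin (pi / real q)" using usin by simp
  thus ?thesis using st by (simp add: zero_le_mult_iff)
qed

lemma u_ge1: assumes "1 \<le> k" "k \<le> q - 1" shows "1 \<le> u k"
proof -
  define t where "t = pi / real q"
  have t0: "0 < t" using q3 by (simp add: t_def)
  have kt1: "t \<le> real k * t" using assms t0 by simp
  have kt2: "real k * t \<le> pi - t"
  proof -
    have "real k \<le> real q - 1" using assms q3 by linarith
    hence "real k * t \<le> (real q - 1) * t" using t0 by (simp add: mult_right_mono)
    also have "\<dots> = pi - t" using q3 by (simp add: t_def field_simps)
    finally show ?thesis .
  qed
  have tp: "t \<le> pi/2"
  proof -
    have "real q \<ge> 3" using q3 by simp
    hence "t \<le> pi/3" unfolding t_def by (intro divide_left_mono) auto
    thus ?thesis using pi_gt_zero by linarith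
  qed
  have "sin t \<le> sin (real k * t)"
  proof (cases "real k * t \<le> pi/2")
    case True thus ?thesis using kt1 t0 pi_gt_zero by (intro sin_monotone_2pi_le) linarith+
  next
    case False
    have "sin t \<le> sin (pi - real k * t)" using kt2 False t0 pi_gt_zero by (intro sin_monotone_2pi_le) linarith+
    thus ?thesis by simp
  qed
  hence "1 * sin t \<le> u k * sin t" using usin[of k] by (simp add: t_def)
  thus ?thesis using st by (simp add: t_def mult_le_cancel_right)
qed

lemma u_diff: "2 \<le> i \<Longrightarrow> i \<le> q \<Longrightarrow> u i - u (i-1) \<le> lm - 1"
proof (induction i rule: nat_induct_at_least)
  case base thus ?case by (simp add: numeral_2_eq_2)
next
  case (Suc n)
  have "u (Suc n) = u (n+1)" by simp
  have e: "u (n+1) = lm * u n - u (n-1)"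
  proof -
    have "n - 1 + 2 = n + 1" "n - 1 + 1 = n" using Suc.hyps by auto
    thus ?thesis using useq_rec[of q "n-1"] by simp
  qed
  have "0 \<le> u n" using Suc by (intro u_nonneg) simp
  hence "0 \<le> (2 - lm) * u n" using lam2 by simp
  moreover have "u n - u (n-1) \<le> lm - 1" using Suc by simp
  ultimately show ?case using e by (simp add: algebra_simps)
qed

lemma u_diff1: "2 \<le> i \<Longrightarrow> i \<le> q \<Longrightarrow> u i - u (i-1) < 1"
  using u_diff lam2 by fastforce

lemma wv_eq: "wv q i = vec2 (u (i+1)) (u i)"
proof (induction i)
  case 0 thus ?case by simp
next
  case (Suc i)
  show ?case using Suc useq_rec[of q i] by (simp add: Umat_def vec2_eq_iff)
qed

end


definition Phi :: "nat \<Rightarrow> nat \<Rightarrow> real^2 \<Rightarrow> real^2" where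
  "Phi q k v = vec2 (v$1 * useq q k + v$2 * useq q (k+1)) (v$1 * useq q (k-1) + v$2 * useq q k)"

inductive_set Vset :: "nat \<Rightarrow> (real^2) set" for q where
  base: "vec2 1 0 \<in> Vset q"
| neg: "v \<in> Vset q \<Longrightarrow> -v \<in> Vset q"
| phi: "v \<in> Vset q \<Longrightarrow> 1 \<le> k \<Longrightarrow> k \<le> q - 1 \<Longrightarrow> Phi q k v \<in> Vset q"

definition Fset :: "nat \<Rightarrow> (real^2) set" where
  "Fset q = Vset q \<union> (\<lambda>v. Smat *v v) ` Vset q"

definition NNp :: "real \<Rightarrow> bool" where "NNp x \<longleftrightarrow> x = 0 \<or> 1 \<le> x"

lemma NNp_mult: "NNp a \<Longrightarrow> NNp b \<Longrightarrow> NNp (a*b)"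
  unfolding NNp_def by (auto intro: order.trans[OF _ mult_mono, of 1 1 1 a b, simplified])

lemma NNp_add: "NNp a \<Longrightarrow> NNp b \<Longrightarrow> NNp (a+b)"
  unfolding NNp_def by auto

lemma NNp_nonneg: "NNp a \<Longrightarrow> 0 \<le> a" unfolding NNp_def by auto

lemma S_mulv[simp]: "Smat *v vec2 x y = vec2 (-y) x" by (simp add: Smat_def)
lemma T_mulv[simp]: "Tmat q *v vec2 x y = vec2 (x + lam q * y) y" by (simp add: Tmat_def)
lemma U_mulv[simp]: "Umat q *v vec2 x y = vec2 (lam q * x - y) x" by (simp add: Umat_def)

lemma Sinv: "matrix_inv Smat = mat2 0 1 (-1) 0"
  by (rule matrix_inv_eq) (simp_all add: Smat_def mat1_2)

lemma Tinv: "matrix_inv (Tmat q) = mat2 1 (- lam q) 0 1"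
  by (rule matrix_inv_eq) (simp_all add: Tmat_def mat1_2)

context hq begin

lemma u_rec1: "1 \<le> k \<Longrightarrow> u (k+1) = lm * u k - u (k-1)"
  using useq_rec[of q "k-1"] by (simp add: numeral_2_eq_2)

lemma u_NNp: "k \<le> q \<Longrightarrow> NNp (u k)"
proof -
  assume k: "k \<le> q"
  show ?thesis
  proof (cases "k = 0 \<or> k = q")
    case True thus ?thesis using u_q by (auto simp: NNp_def)
  next
    case False
    hence "1 \<le> k" "k \<le> q - 1" using k by auto
    thus ?thesis using u_ge1[of k] by (simp add: NNp_def)
  qed
qed

lemma u_qm2: "u (q-2) = lm"
  using u_rec1[of "q-1"] q3 u_q u_qm1 by (simp add: numeral_2_eq_2 Suc_diff_Suc)

lemma Vinv: "v \<in> Vset q \<Longrightarrow>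
   ((0 \<le> v$1 \<and> 0 \<le> v$2) \<or> (v$1 \<le> 0 \<and> v$2 \<le> 0)) \<and> NNp \<bar>v$1\<bar> \<and> NNp \<bar>v$2\<bar>"
proof (induction rule: Vset.induct)
  case base thus ?case by (simp add: NNp_def)
next
  case (neg v) thus ?case by auto
next
  case (phi v k)
  have u1: "NNp (u k)" "NNp (u (k+1))" "NNp (u (k-1))" using phi(3,4) q3 by (auto intro!: u_NNp)
  have g: "NNp (x * u k + y * u (k+1)) \<and> NNp (x * u (k-1) + y * u k)"
    if "NNp x" "NNp y" for x y using u1 that by (auto intro!: NNp_add NNp_mult)
  from phi.IH consider "0 \<le> v$1" "0 \<le> v$2" | "v$1 \<le> 0" "v$2 \<le> 0" by auto
  then show ?case
  proof cases
    case 1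
    then have "NNp (v$1)" "NNp (v$2)" using phi.IH by auto
    from g[OF this] show ?thesis using NNp_nonneg by (auto simp: Phi_def)
  next
    case 2
    then have "NNp (- v$1)" "NNp (- v$2)" using phi.IH by auto
    from g[OF this] have "NNp (-(v$1 * u k + v$2 * u (k+1)))" "NNp (-(v$1 * u (k-1) + v$2 * u k))"
      by (simp_all add: algebra_simps)
    then show ?thesis using NNp_nonneg by (auto simp: Phi_def) (auto simp: NNp_def)
  qed
qed

end


lemma neg_vec2[simp]: "- vec2 x y = vec2 (-x) (-y)"
  by (simp add: vec_eq_iff forall_2)

lemma vec2_cases: obtains x y where "v = vec2 x y"
  using vec2_eta by blast

definition "Tinvm q = mat2 1 (- lam q) 0 1"
definition "Sinvm = mat2 0 1 (-1) 0"

lemma Tinvm_mulv[simp]: "Tinvm q *v vec2 x y = vec2 (x - lam q * y) y" by (simp add: Tinvm_def)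
lemma Sinvm_mulv[simp]: "Sinvm *v vec2 x y = vec2 y (-x)" by (simp add: Sinvm_def)

lemma Sinv': "matrix_inv Smat = Sinvm" by (simp add: Sinv Sinvm_def)
lemma Tinv': "matrix_inv (Tmat q) = Tinvm q" by (simp add: Tinv Tinvm_def)

context hq begin

lemma Phi_vec2[simp]: "Phi q k (vec2 x y) = vec2 (x*u k + y*u (k+1)) (x*u (k-1) + y*u k)"
  by (simp add: Phi_def)

lemma Phi1: "Phi q 1 v = Tmat q *v v"
  by (cases v rule: vec2_cases) (simp add: numeral_2_eq_2 algebra_simps)

lemma U_Phi: "1 \<le> k \<Longrightarrow> Umat q *v Phi q k v = Phi q (k+1) v"
proof -
  assume k: "1 \<le> k"
  have a: "u (Suc k) = lm * u k - u (k-1)" using u_rec1[of k] k by simp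
  have b: "u (Suc (Suc k)) = lm * u (Suc k) - u k" using u_rec1[of "k+1"] by simp
  show ?thesis by (cases v rule: vec2_cases) (simp add: vec2_eq_iff a b algebra_simps)
qed

lemma Phi_q: "Phi q q v = Smat *v v"
  using u_q u_qp1 u_qm1 by (cases v rule: vec2_cases) simp

lemma Phi_qm1: "Phi q (q-1) v = vec2 (v$1) (lm * v$1 + v$2)"
proof -
  have "q - 1 - 1 = q - 2" "q - 1 + 1 = q" using q3 by auto
  thus ?thesis using u_q u_qm1 u_qm2 by (cases v rule: vec2_cases) (simp add: algebra_simps)
qed

lemma Tinv_Phi: "2 \<le> k \<Longrightarrow> Tinvm q *v Phi q k v = Smat *v Phi q (k-1) v"
proof -
  assume k: "2 \<le> k"
  then obtain m where m: "k = Suc (Suc m)" by (metis add_2_eq_Suc le_Suc_ex)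
  show ?thesis unfolding m by (cases v rule: vec2_cases) (simp add: vec2_eq_iff algebra_simps)
qed

lemma Fset_neg: "v \<in> Fset q \<Longrightarrow> -v \<in> Fset q"
proof -
  assume "v \<in> Fset q"
  then consider "v \<in> Vset q" | w where "w \<in> Vset q" "v = Smat *v w" unfolding Fset_def by auto
  then show ?thesis
  proof cases
    case 1 thus ?thesis by (simp add: Fset_def Vset.neg)
  next
    case 2
    have "-v = Smat *v (-w)" using 2 by (cases w rule: vec2_cases) simp
    thus ?thesis using 2 Vset.neg unfolding Fset_def by blast
  qed
qed

lemma U_V: "v \<in> Vset q \<Longrightarrow> Umat q *v v \<in> Fset q"
proof (induction rule: Vset.induct)
  case base
  have "Umat q *v vec2 1 0 = Phi q 2 (vec2 1 0)" by (simp add: numeral_2_eq_2)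
  moreover have "Phi q 2 (vec2 1 0) \<in> Vset q" using q3 by (intro Vset.intros) auto
  ultimately show ?case by (simp add: Fset_def)
next
  case (neg v)
  have "Umat q *v (-v) = - (Umat q *v v)" by (cases v rule: vec2_cases) simp
  thus ?case using Fset_neg neg by simp
next
  case (phi v k)
  have e: "Umat q *v Phi q k v = Phi q (k+1) v" using U_Phi phi by simp
  show ?case
  proof (cases "k + 1 \<le> q - 1")
    case True thus ?thesis using e phi by (simp add: Fset_def Vset.phi)
  next
    case False
    hence "k + 1 = q" using phi by auto
    thus ?thesis using e Phi_q phi by (simp add: Fset_def)
  qed
qed

lemma Tinv_V: "v \<in> Vset q \<Longrightarrow> Tinvm q *v v \<in> Fset q"
proof (induction rule: Vset.induct)
  case base
  show ?case by (simp add: Fset_def Vset.base)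
next
  case (neg v)
  have "Tinvm q *v (-v) = - (Tinvm q *v v)" by (cases v rule: vec2_cases) simp
  thus ?case using Fset_neg neg by simp
next
  case (phi v k)
  show ?case
  proof (cases "k = 1")
    case True
    have "Tinvm q *v Phi q 1 v = v" unfolding Phi1 by (cases v rule: vec2_cases) simp
    thus ?thesis using True phi by (simp add: Fset_def)
  next
    case False
    hence "Tinvm q *v Phi q k v = Smat *v Phi q (k-1) v" using Tinv_Phi phi by simp
    moreover have "Phi q (k-1) v \<in> Vset q" using phi False by (intro Vset.phi) auto
    ultimately show ?thesis by (simp add: Fset_def)
  qed
qed

lemma Fset_S: "v \<in> Fset q \<Longrightarrow> Smat *v v \<in> Fset q"
proof -
  assume "v \<in> Fset q"
  then consider "v \<in> Vset q" | w where "w \<in> Vset q" "v = Smat *v w" unfolding Fset_def by auto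
  then show ?thesis
  proof cases
    case 1 thus ?thesis by (simp add: Fset_def)
  next
    case 2
    have "Smat *v v = -w" using 2 by (cases w rule: vec2_cases) simp
    thus ?thesis using 2 Vset.neg unfolding Fset_def by auto
  qed
qed

lemma Fset_Sinv: "v \<in> Fset q \<Longrightarrow> Sinvm *v v \<in> Fset q"
proof -
  assume v: "v \<in> Fset q"
  have "Sinvm *v v = - (Smat *v v)" by (cases v rule: vec2_cases) simp
  thus ?thesis using Fset_neg Fset_S v by simp
qed

lemma Fset_T: "v \<in> Fset q \<Longrightarrow> Tmat q *v v \<in> Fset q"
proof -
  assume "v \<in> Fset q"
  then consider "v \<in> Vset q" | w where "w \<in> Vset q" "v = Smat *v w" unfolding Fset_def by auto
  then show ?thesis
  proof cases
    case 1
    hence "Phi q 1 v \<in> Vset q" using q3 by (intro Vset.phi) auto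
    moreover have "Tmat q *v v = Phi q 1 v" using Phi1[of v] by simp
    ultimately show ?thesis by (simp add: Fset_def)
  next
    case 2
    have "Tmat q *v v = Umat q *v w" using 2 by (cases w rule: vec2_cases) simp
    thus ?thesis using 2 U_V by simp
  qed
qed

lemma Fset_Tinv: "v \<in> Fset q \<Longrightarrow> Tinvm q *v v \<in> Fset q"
proof -
  assume "v \<in> Fset q"
  then consider "v \<in> Vset q" | w where "w \<in> Vset q" "v = Smat *v w" unfolding Fset_def by auto
  then show ?thesis
  proof cases
    case 1 thus ?thesis using Tinv_V by simp
  next
    case 2
    obtain x y where w: "w = vec2 x y" by (rule vec2_cases)
    have "Tinvm q *v v = Smat *v vec2 x (lm * x + y)" using 2 w by (simp add: algebra_simps)
    also have "vec2 x (lm * x + y) = Phi q (q-1) w" using Phi_qm1[of w] w by simp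
    finally have "Tinvm q *v v = Smat *v Phi q (q-1) w" .
    moreover have "Phi q (q-1) w \<in> Vset q" using 2 q3 by (intro Vset.phi) auto
    ultimately show ?thesis by (simp add: Fset_def)
  qed
qed

lemma Hecke_Fset: "A \<in> Hecke q \<Longrightarrow> \<forall>v \<in> Fset q. A *v v \<in> Fset q"
proof (induction rule: Hecke.induct)
  case id thus ?case by simp
next
  case (S A) thus ?case by (simp add: matrix_vector_mul_assoc[symmetric] Fset_S)
next
  case (Sinv A) thus ?case by (simp add: matrix_vector_mul_assoc[symmetric] Fset_Sinv Sinv')
next
  case (T A) thus ?case by (simp add: matrix_vector_mul_assoc[symmetric] Fset_T)
next
  case (Tinv A) thus ?case by (simp add: matrix_vector_mul_assoc[symmetric] Fset_Tinv Tinv')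
qed

lemma Fset_NN: "v \<in> Fset q \<Longrightarrow> NNp \<bar>v$1\<bar> \<and> NNp \<bar>v$2\<bar>"
proof -
  assume "v \<in> Fset q"
  then consider "v \<in> Vset q" | w where "w \<in> Vset q" "v = Smat *v w" unfolding Fset_def by auto
  then show ?thesis
  proof cases
    case 1 thus ?thesis using Vinv by blast
  next
    case 2
    obtain x y where w: "w = vec2 x y" by (rule vec2_cases)
    show ?thesis using Vinv[OF 2(1)] 2(2) w by auto
  qed
qed

lemma Lam_NN: "v \<in> Lam q \<Longrightarrow> NNp \<bar>v$1\<bar> \<and> NNp \<bar>v$2\<bar>"
proof -
  assume "v \<in> Lam q"
  then obtain A where A: "A \<in> Hecke q" "v = A *v vec2 1 0" by (auto simp: Lam_def)
  have "vec2 1 0 \<in> Fset q" by (simp add: Fset_def Vset.base)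
  thus ?thesis using Hecke_Fset[OF A(1)] A(2) Fset_NN by auto
qed

end


definition adj2 :: "real^2^2 \<Rightarrow> real^2^2" where
  "adj2 A = mat2 (A$2$2) (-A$1$2) (-A$2$1) (A$1$1)"

lemma adj2_mat2[simp]: "adj2 (mat2 a b c d) = mat2 d (-b) (-c) a" by (simp add: adj2_def)

lemma adj2_mult: "adj2 (A ** B) = adj2 B ** adj2 A"
  by (subst (1 2) mat2_eta[of A], subst (1 2) mat2_eta[of B]) (simp add: mat2_eq_iff algebra_simps)

lemma mul_adj2: "det A = 1 \<Longrightarrow> A ** adj2 A = mat 1"
  by (subst (asm) mat2_eta[of A], subst (1 2) mat2_eta[of A]) (simp add: mat1_2 mat2_eq_iff algebra_simps)

lemma adj2_mul: "det A = 1 \<Longrightarrow> adj2 A ** A = mat 1"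
  by (subst (asm) mat2_eta[of A], subst (1 2) mat2_eta[of A]) (simp add: mat1_2 mat2_eq_iff algebra_simps)

lemma Hecke_mult: "B \<in> Hecke q \<Longrightarrow> A \<in> Hecke q \<Longrightarrow> A ** B \<in> Hecke q"
proof (induction B rule: Hecke.induct)
  case id thus ?case by simp
next
  case (S B) thus ?case using Hecke.S[of "A ** B"] by (simp add: matrix_mul_assoc)
next
  case (Sinv B) thus ?case using Hecke.Sinv[of "A ** B"] by (simp add: matrix_mul_assoc)
next
  case (T B) thus ?case using Hecke.T[of "A ** B"] by (simp add: matrix_mul_assoc)
next
  case (Tinv B) thus ?case using Hecke.Tinv[of "A ** B"] by (simp add: matrix_mul_assoc)
qed

lemma S_Hecke: "Smat \<in> Hecke q" using Hecke.S[OF Hecke.id] by simp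
lemma T_Hecke: "Tmat q \<in> Hecke q" using Hecke.T[OF Hecke.id] by simp
lemma Sinv_Hecke: "Sinvm \<in> Hecke q" using Hecke.Sinv[OF Hecke.id] by (simp add: Sinv')
lemma Tinv_Hecke: "Tinvm q \<in> Hecke q" using Hecke.Tinv[OF Hecke.id] by (simp add: Tinv')
lemma U_Hecke: "Umat q \<in> Hecke q"
proof -
  have "Umat q = Tmat q ** Smat" by (simp add: Umat_def Tmat_def Smat_def)
  thus ?thesis using Hecke_mult[OF S_Hecke T_Hecke] by simp
qed

lemma detS: "det Smat = 1" by (simp add: Smat_def)
lemma detT: "det (Tmat q) = 1" by (simp add: Tmat_def)
lemma detSi: "det Sinvm = 1" by (simp add: Sinvm_def)
lemma detTi: "det (Tinvm q) = 1" by (simp add: Tinvm_def)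

lemma Hecke_det: "A \<in> Hecke q \<Longrightarrow> det A = 1"
  by (induction rule: Hecke.induct) (simp_all add: det_mul Sinv' Tinv' detS detT detSi detTi)

lemma Hecke_adj: "A \<in> Hecke q \<Longrightarrow> adj2 A \<in> Hecke q"
proof (induction rule: Hecke.induct)
  case id
  have "adj2 (mat 1) = mat 1" by (simp add: mat1_2)
  thus ?case using Hecke.id by simp
next
  case (S A)
  have "adj2 Smat = Sinvm" by (simp add: Smat_def Sinvm_def)
  thus ?case using S Hecke_mult Sinv_Hecke by (simp add: adj2_mult)
next
  case (Sinv A)
  have "adj2 Sinvm = Smat" by (simp add: Smat_def Sinvm_def)
  thus ?case using Sinv Hecke_mult S_Hecke by (simp add: adj2_mult Sinv')
next
  case (T A)
  have "adj2 (Tmat q) = Tinvm q" by (simp add: Tmat_def Tinvm_def)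
  thus ?case using T Hecke_mult Tinv_Hecke by (simp add: adj2_mult)
next
  case (Tinv A)
  have "adj2 (Tinvm q) = Tmat q" by (simp add: Tmat_def Tinvm_def)
  thus ?case using Tinv Hecke_mult T_Hecke by (simp add: adj2_mult Tinv')
qed

lemma Lam_mult: "M \<in> Hecke q \<Longrightarrow> v \<in> Lam q \<Longrightarrow> M *v v \<in> Lam q"
  unfolding Lam_def using Hecke_mult by (auto simp: matrix_vector_mul_assoc)

lemma act_Lam: "M \<in> Hecke q \<Longrightarrow> act M (Lam q) = Lam q"
proof
  assume M: "M \<in> Hecke q"
  show "act M (Lam q) \<subseteq> Lam q" using Lam_mult M by (auto simp: act_def)
  show "Lam q \<subseteq> act M (Lam q)"
  proof
    fix v assume v: "v \<in> Lam q"
    have "v = M *v (adj2 M *v v)"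
      using mul_adj2[OF Hecke_det[OF M]] by (simp add: matrix_vector_mul_assoc)
    moreover have "adj2 M *v v \<in> Lam q" using Lam_mult[OF Hecke_adj[OF M] v] .
    ultimately show "v \<in> act M (Lam q)" by (auto simp: act_def)
  qed
qed

lemma act_mult: "act (A ** B) L = act A (act B L)"
  by (auto simp: act_def matrix_vector_mul_assoc image_image)

lemma act_mult_Lam: "B \<in> Hecke q \<Longrightarrow> act (A ** B) (Lam q) = act A (Lam q)"
  by (simp add: act_mult act_Lam)

lemma e1_Lam: "vec2 1 0 \<in> Lam q"
proof -
  have "vec2 1 0 = mat 1 *v vec2 1 0 \<and> mat 1 \<in> Hecke q" using Hecke.id by simp
  thus ?thesis unfolding Lam_def by blast
qed

lemma neg_Lam: "v \<in> Lam q \<Longrightarrow> -v \<in> Lam q"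
proof -
  assume v: "v \<in> Lam q"
  have "-v = Smat *v (Smat *v v)" by (cases v rule: vec2_cases) simp
  thus ?thesis using Lam_mult[OF S_Hecke] v by simp
qed

lemma wv_Lam: "wv q i \<in> Lam q"
  by (induction i) (simp_all add: e1_Lam Lam_mult U_Hecke)

lemma gmat_T: "gmat a b ** Tmat q = gmat a (b + lam q * a)"
  by (simp add: gmat_def Tmat_def algebra_simps)

lemma act_g_shift_nat: "act (gmat a (b + real n * lam q * a)) (Lam q) = act (gmat a b) (Lam q)"
proof (induction n)
  case 0 thus ?case by simp
next
  case (Suc n)
  have "gmat a (b + real (Suc n) * lam q * a) = gmat a (b + real n * lam q * a) ** Tmat q"
    by (simp add: gmat_T algebra_simps)
  thus ?case using Suc act_mult_Lam[OF T_Hecke] by simp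
qed

lemma act_g_shift: "act (gmat a (b + real_of_int n * lam q * a)) (Lam q) = act (gmat a b) (Lam q)"
proof (cases "n \<ge> 0")
  case True
  define m where "m = nat n"
  have "n = int m" using True by (simp add: m_def)
  thus ?thesis using act_g_shift_nat[of a b m] by simp
next
  case False
  define m where "m = nat (-n)"
  have m: "n = - int m" using False by (simp add: m_def)
  have "act (gmat a b) (Lam q) = act (gmat a ((b - real m * lam q * a) + real m * lam q * a)) (Lam q)" by simp
  also have "\<dots> = act (gmat a (b - real m * lam q * a)) (Lam q)" by (rule act_g_shift_nat)
  finally show ?thesis using m by simp
qed



definition ff :: "nat \<Rightarrow> real \<Rightarrow> real \<Rightarrow> nat \<Rightarrow> real" where
  "ff q a b j = a * useq q (j+1) + b * useq q j"

context hq begin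

lemma pdot_wv: "pdot (a,b) (wv q j) = ff q a b j"
  by (simp add: pdot_def wv_eq ff_def)

lemma cass: "1 \<le> i \<Longrightarrow> (u i)^2 - u (i-1) * u (i+1) = 1"
  using cassini[of q "i-1"] by (simp add: numeral_2_eq_2)

lemma ff0: "ff q a b 0 = a" by (simp add: ff_def)
lemma ff1: "ff q a b 1 = lm * a + b" by (simp add: ff_def numeral_2_eq_2)
lemma ffqm1: "ff q a b (q-1) = b" using q3 u_q u_qm1 by (simp add: ff_def)
lemma ff_rec: "1 \<le> j \<Longrightarrow> ff q a b (j+1) = lm * ff q a b j - ff q a b (j-1)"
proof -
  assume "1 \<le> j"
  define m where "m = j - 1"
  have m: "j = Suc m" using \<open>1 \<le> j\<close> by (simp add: m_def)
  show ?thesis unfolding m by (simp add: ff_def algebra_simps)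
qed

lemma ff_pos_next:
  assumes a: "0 < a" "a \<le> 1" and i: "1 \<le> i" "i \<le> q-1" and f: "ff q a b (i-1) > 1"
  shows "ff q a b i > 0"
proof (rule ccontr)
  assume "\<not> ff q a b i > 0"
  hence h: "a * u (i+1) + b * u i \<le> 0" by (simp add: ff_def)
  have ui: "1 \<le> u i" using u_ge1 i by simp
  have um: "0 \<le> u (i-1)" using u_nonneg i by simp
  have "b * u i * u (i-1) \<le> - a * u (i+1) * u (i-1)"
    using mult_right_mono[OF h um] by (simp add: algebra_simps)
  hence "u i * ff q a b (i-1) \<le> a * ((u i)^2 - u (i-1) * u (i+1))"
    using i by (simp add: ff_def power2_eq_square algebra_simps)
  also have "\<dots> = a" using cass i by simp
  finally have A: "u i * ff q a b (i-1) \<le> a" .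
  have B: "u i * 1 < u i * ff q a b (i-1)" by (rule mult_strict_left_mono) (use f ui in auto)
  show False using A B a ui by linarith
qed

lemma ff_neg_prop:
  assumes a: "0 < a" and k: "1 \<le> k" "k + 1 \<le> q" and f: "ff q a b k \<le> 0"
  shows "ff q a b (k+1) < 0"
proof -
  have h: "b * u k \<le> - a * u (k+1)" using f by (simp add: ff_def)
  have uk: "1 \<le> u k" using u_ge1 k by simp
  have u1: "0 \<le> u (k+1)" using u_nonneg k by simp
  have "b * u k * u (k+1) \<le> - a * u (k+1) * u (k+1)"
    using mult_right_mono[OF h u1] by simp
  hence "u k * ff q a b (k+1) \<le> - a * ((u (k+1))^2 - u k * u (k+2))"
    by (simp add: ff_def power2_eq_square algebra_simps)
  also have "\<dots> = - a" using cassini[of q k] by simp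
  finally have "u k * ff q a b (k+1) < 0" using a by simp
  thus ?thesis using uk by (simp add: mult_less_0_iff)
qed

lemma ff_pos_back:
  assumes a: "0 < a" and m: "m \<le> q - 1" and f: "ff q a b m > 0"
  shows "1 \<le> k \<Longrightarrow> k \<le> m \<Longrightarrow> ff q a b k > 0"
  using m f
proof (induction m)
  case 0 thus ?case by simp
next
  case (Suc m)
  show ?case
  proof (cases "k = Suc m")
    case True thus ?thesis using Suc by simp
  next
    case False
    hence km: "k \<le> m" using Suc by simp
    have "ff q a b m > 0"
    proof (rule ccontr)
      assume "\<not> ff q a b m > 0"
      hence "ff q a b (m+1) < 0" using Suc km a by (intro ff_neg_prop) auto
      thus False using Suc by simp
    qed
    thus ?thesis using Suc km by simp
  qed
qed

lemma ff_mono: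
  assumes "1 \<le> k" "0 \<le> ff q a b k"
  shows "ff q a b (k+1) - ff q a b k \<le> ff q a b k - ff q a b (k-1)"
proof -
  have "lm * ff q a b k \<le> 2 * ff q a b k" using lam2 assms(2) by (simp add: mult_right_mono)
  thus ?thesis using ff_rec[OF assms(1)] by simp
qed

lemma ff_D:
  "ff q a b (m+1) > ff q a b m \<Longrightarrow> (\<forall>k. 1 \<le> k \<and> k \<le> m \<longrightarrow> 0 \<le> ff q a b k) \<Longrightarrow>
   (\<forall>k. 1 \<le> k \<and> k \<le> m \<longrightarrow> ff q a b k \<le> ff q a b m)"
proof (induction m)
  case 0 thus ?case by simp
next
  case (Suc m)
  show ?case
  proof (cases "m = 0")
    case True thus ?thesis by auto
  next
    case False
    have "0 \<le> ff q a b (Suc m)" using Suc.prems by simp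
    hence "ff q a b (Suc m + 1) - ff q a b (Suc m) \<le> ff q a b (Suc m) - ff q a b m"
      using ff_mono[of "Suc m"] by simp
    hence lt: "ff q a b (m+1) > ff q a b m" using Suc.prems by simp
    hence "\<forall>k. 1 \<le> k \<and> k \<le> m \<longrightarrow> ff q a b k \<le> ff q a b m" using Suc by simp
    thus ?thesis using lt by (auto simp: le_Suc_eq)
  qed
qed

lemma ff_E:
  assumes a: "0 < a" and f1: "ff q a b 1 > 1" and j: "1 \<le> j" "j + 1 \<le> q - 1" and f: "ff q a b (j+1) > 1"
  shows "ff q a b j > 1"
proof (rule ccontr)
  assume "\<not> ff q a b j > 1"
  hence fj: "ff q a b j \<le> 1" by simp
  have pos: "\<forall>k. 1 \<le> k \<and> k \<le> j \<longrightarrow> 0 \<le> ff q a b k"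
    using ff_pos_back[OF a j(2), of b] f by (auto intro: less_imp_le)
  have "ff q a b (j+1) > ff q a b j" using fj f by simp
  from ff_D[OF this pos] have "ff q a b 1 \<le> ff q a b j" using j by simp
  thus False using f1 fj by simp
qed

lemma ff_gt1:
  assumes a: "0 < a" and f1: "ff q a b 1 > 1" and i: "i \<le> q - 1" and f: "ff q a b (i-1) > 1"
  shows "1 \<le> j \<Longrightarrow> j \<le> i - 1 \<Longrightarrow> ff q a b j > 1"
proof -
  have "\<forall>j. 1 \<le> j \<and> j + n = i - 1 \<longrightarrow> ff q a b j > 1" for n
  proof (induction n)
    case 0 thus ?case using f by simp
  next
    case (Suc n)
    show ?case
    proof (intro allI impI)
      fix j assume j: "1 \<le> j \<and> j + Suc n = i - 1"
      hence "ff q a b (j+1) > 1" using Suc by simp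
      moreover have "j + 1 \<le> q - 1" using j i by linarith
      ultimately show "ff q a b j > 1" using ff_E[OF a f1] j by simp
    qed
  qed
  moreover assume "1 \<le> j" "j \<le> i - 1"
  ultimately show ?thesis by (metis le_add_diff_inverse)
qed

end


lemma gmat_mulv[simp]: "gmat a b *v vec2 x y = vec2 (a*x + b*y) (y / a)"
  by (simp add: gmat_def)

lemma act_g_mem: assumes "a > 0"
  shows "z \<in> act (gmat a b) L \<longleftrightarrow> vec2 (z$1/a - b*z$2) (a*z$2) \<in> L"
proof
  assume "z \<in> act (gmat a b) L"
  then obtain v where v: "v \<in> L" "z = gmat a b *v v" by (auto simp: act_def)
  obtain x y where xy: "v = vec2 x y" by (rule vec2_cases)
  have "vec2 (z$1/a - b*z$2) (a*z$2) = v" using v xy assms by (simp add: field_simps)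
  thus "vec2 (z$1/a - b*z$2) (a*z$2) \<in> L" using v by simp
next
  assume h: "vec2 (z$1/a - b*z$2) (a*z$2) \<in> L"
  have "gmat a b *v vec2 (z$1/a - b*z$2) (a*z$2) = z" using assms
    by (subst (3) vec2_eta[of z]) (simp add: vec2_eq_iff field_simps)
  thus "z \<in> act (gmat a b) L" using h unfolding act_def by (metis image_eqI)
qed

lemma act_memI: "v \<in> L \<Longrightarrow> A *v v \<in> act A L" by (simp add: act_def)

lemma gpt_eq: "gpt (a,b) = gmat a b" by (simp add: gpt_def)

context hq begin

lemma Lam_coord: "v \<in> Lam q \<Longrightarrow> v$1 = 0 \<or> 1 \<le> \<bar>v$1\<bar>" "v \<in> Lam q \<Longrightarrow> v$2 = 0 \<or> 1 \<le> \<bar>v$2\<bar>"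
  using Lam_NN by (auto simp: NNp_def)

lemma e2_Lam: "vec2 0 1 \<in> Lam q"
  using Lam_mult[OF S_Hecke e1_Lam] by simp

lemma horiz: assumes "a > 0" "c > 0" "vec2 c 0 \<in> act (gmat a b) (Lam q)" shows "a \<le> c"
proof -
  have "vec2 (c/a) 0 \<in> Lam q" using assms act_g_mem by simp
  hence "c/a = 0 \<or> 1 \<le> \<bar>c/a\<bar>" using Lam_coord(1) by fastforce
  thus ?thesis using assms by (auto simp: field_simps)
qed

lemma Farey_unique:
  assumes p: "(a,b) \<in> Farey q" and p': "(a',b') \<in> Farey q"
    and eq: "act (gmat a b) (Lam q) = act (gmat a' b') (Lam q)"
  shows "a = a' \<and> b = b'"
proof -
  have a0: "0 < a" "a \<le> 1" "1 - lm * a < b" "b \<le> 1" using p by (auto simp: Farey_def)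
  have a0': "0 < a'" "a' \<le> 1" "1 - lm * a' < b'" "b' \<le> 1" using p' by (auto simp: Farey_def)
  have m1: "gmat a b *v vec2 1 0 \<in> act (gmat a b) (Lam q)" by (rule act_memI[OF e1_Lam])
  have m1': "gmat a' b' *v vec2 1 0 \<in> act (gmat a' b') (Lam q)" by (rule act_memI[OF e1_Lam])
  have "a' \<le> a" using horiz[of a' a b'] m1 eq a0 a0' by simp
  moreover have "a \<le> a'" using horiz[of a a' b] m1' eq a0 a0' by simp
  ultimately have aa: "a' = a" by simp
  \<comment> \<open>second coordinate\<close>
  have tl: "vec2 (-lm) 1 \<in> Lam q" using Lam_mult[OF Tinv_Hecke e2_Lam] by simp
  have key: "vec2 ((b2 - b1)/a) 1 \<in> Lam q \<and> vec2 ((b2 - b1)/a - lm) 1 \<in> Lam q"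
    if E: "act (gmat a b1) (Lam q) = act (gmat a b2) (Lam q)" for b1 b2
  proof -
    have "gmat a b2 *v vec2 0 1 \<in> act (gmat a b1) (Lam q)" using E act_memI[OF e2_Lam] by metis
    hence A: "vec2 ((b2 - b1)/a) 1 \<in> Lam q" using act_g_mem a0 by (simp add: field_simps)
    have "gmat a b2 *v vec2 (-lm) 1 \<in> act (gmat a b1) (Lam q)" using E act_memI[OF tl] by metis
    hence "vec2 ((- (a*lm) + b2)/a - b1/a) 1 \<in> Lam q" using act_g_mem a0 by (simp add: field_simps)
    moreover have "(- (a*lm) + b2)/a - b1/a = (b2 - b1)/a - lm" using a0 by (simp add: field_simps)
    ultimately show ?thesis using A by simp
  qed
  have eq2: "act (gmat a b) (Lam q) = act (gmat a b') (Lam q)" using eq aa by simp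
  have bnd: "\<bar>(b - b')/a\<bar> < lm"
  proof -
    have "\<bar>b - b'\<bar> < lm * a" using a0 a0' aa by auto
    thus ?thesis using a0 by (simp add: field_simps abs_div)
  qed
  have no: False if t0: "t > 0" "t < lm" "vec2 t 1 \<in> Lam q" "vec2 (t - lm) 1 \<in> Lam q" for t
  proof -
    have "1 \<le> t" using Lam_coord(1)[OF t0(3)] t0 by auto
    moreover have "1 \<le> \<bar>t - lm\<bar>" using Lam_coord(1)[OF t0(4)] t0 by auto
    ultimately show False using t0 lam2 by auto
  qed
  have "b = b'"
  proof (rule ccontr)
    assume ne: "b \<noteq> b'"
    show False
    proof (cases "b' > b")
      case True
      thus False using no[of "(b' - b)/a"] key[OF eq2] bnd a0 by (auto simp: abs_minus_commute field_simps)
    next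
      case False
      hence "b > b'" using ne by simp
      thus False using no[of "(b - b')/a"] key[OF eq2[symmetric]] bnd a0 by (auto simp: field_simps)
    qed
  qed
  thus ?thesis using aa by simp
qed

end


context hq begin

lemma part1:
  assumes det: "det A = 1" and c: "0 < c" "c \<le> 1" and mem: "vec2 c 0 \<in> act A (Lam q)"
  shows "(\<exists>!p. p \<in> Farey q \<and> act A (Lam q) = act (gpt p) (Lam q)) \<and>
         (\<forall>p \<in> Farey q. act A (Lam q) = act (gpt p) (Lam q) \<longrightarrow> fst p = c)"
proof -
  obtain v0 where v0: "v0 \<in> Lam q" "A *v v0 = vec2 c 0" using mem by (auto simp: act_def)
  obtain M where M: "M \<in> Hecke q" "v0 = M *v vec2 1 0" using v0 by (auto simp: Lam_def)
  define B where "B = A ** M"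
  have Bv: "B *v vec2 1 0 = vec2 c 0" using v0 M by (simp add: B_def matrix_vector_mul_assoc)
  have Be: "B$1$1 = c" "B$2$1 = 0" using Bv by (subst (asm) mat2_eta[of B], simp add: vec2_eq_iff)+
  have dB: "det B = 1" using det Hecke_det[OF M(1)] by (simp add: B_def det_mul)
  have B22: "B$2$2 = 1/c" using dB Be c by (subst (asm) mat2_eta[of B]) (simp add: field_simps)
  define \<beta> where "\<beta> = B$1$2"
  have Bg: "B = gmat c \<beta>" using Be B22 by (subst mat2_eta[of B]) (simp add: gmat_def \<beta>_def)
  have actB: "act A (Lam q) = act (gmat c \<beta>) (Lam q)"
    using act_mult_Lam[OF M(1), of A] Bg by (simp add: B_def)
  define n where "n = \<lfloor>(1 - \<beta>) / (lm * c)\<rfloor>"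
  define b where "b = \<beta> + real_of_int n * lm * c"
  have lc: "0 < lm * c" using lam1 c by simp
  have n1: "real_of_int n \<le> (1 - \<beta>) / (lm * c)" unfolding n_def by (rule of_int_floor_le)
  have n2: "(1 - \<beta>) / (lm * c) < real_of_int n + 1" unfolding n_def by (rule real_of_int_floor_add_one_gt)
  have "real_of_int n * (lm * c) \<le> 1 - \<beta>" using n1 lc by (simp add: le_divide_eq)
  hence b1: "b \<le> 1" by (simp add: b_def algebra_simps)
  have "1 - \<beta> < (real_of_int n + 1) * (lm * c)" using n2 lc by (simp add: divide_less_eq)
  hence b2: "1 - lm * c < b" by (simp add: b_def algebra_simps)
  have F: "(c, b) \<in> Farey q" using b1 b2 c by (simp add: Farey_def)
  have actb: "act A (Lam q) = act (gpt (c,b)) (Lam q)"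
    using actB act_g_shift[of c \<beta> n] by (simp add: gpt_eq b_def)
  have uniq: "p = (c,b)" if "p \<in> Farey q" "act A (Lam q) = act (gpt p) (Lam q)" for p
  proof -
    obtain a' b' where p: "p = (a', b')" by (cases p)
    have "act (gmat a' b') (Lam q) = act (gmat c b) (Lam q)" using that actb p by (simp add: gpt_eq)
    thus ?thesis using Farey_unique[of a' b' c b] that F p by simp
  qed
  show ?thesis
  proof
    show "\<exists>!p. p \<in> Farey q \<and> act A (Lam q) = act (gpt p) (Lam q)"
      using F actb uniq by blast
    show "\<forall>p\<in>Farey q. act A (Lam q) = act (gpt p) (Lam q) \<longrightarrow> fst p = c"
      using uniq by auto
  qed
qed

lemma part1b: "p \<in> Farey q \<Longrightarrow> p' \<in> Farey q \<Longrightarrow> act (gpt p) (Lam q) = act (gpt p') (Lam q) \<Longrightarrow> p = p'"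
  using Farey_unique by (cases p, cases p') (auto simp: gpt_eq)

end


definition "Uinvm q = mat2 0 1 (-1) (lam q)"

lemma Uinvm_mulv[simp]: "Uinvm q *v vec2 x y = vec2 y (lam q * y - x)"
  by (simp add: Uinvm_def)

context hq begin

lemma Uinv_Hecke: "Uinvm q \<in> Hecke q"
proof -
  have "adj2 (Umat q) = Uinvm q" by (simp add: Umat_def Uinvm_def)
  thus ?thesis using Hecke_adj[OF U_Hecke[of q]] by metis
qed

lemma iterU:
  "(((*v) (Uinvm q)) ^^ j) (vec2 x y) $ 2 = u (j+1) * y - u j * x \<and>
   (((*v) (Uinvm q)) ^^ (Suc j)) (vec2 x y) $ 2 = u (j+2) * y - u (j+1) * x"
proof (induction j)
  case 0 thus ?case by (simp add: numeral_2_eq_2)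
next
  case (Suc j)
  define A where "A = (\<lambda>j. (((*v) (Uinvm q)) ^^ j) (vec2 x y) $ 2)"
  define B where "B = (\<lambda>j. (((*v) (Uinvm q)) ^^ j) (vec2 x y) $ 1)"
  have g: "Uinvm q *v w = vec2 (w$2) (lm * w$2 - w$1)" for w
    by (cases w rule: vec2_cases) simp
  have B1: "B (Suc j) = A j" by (simp add: A_def B_def g)
  have H: "A (Suc (Suc j)) = lm * A (Suc j) - B (Suc j)"
    unfolding A_def B_def by (simp only: funpow.simps comp_apply g vec2_nth)
  have IH: "A j = u (j+1) * y - u j * x" "A (Suc j) = u (j+2) * y - u (j+1) * x"
    using Suc by (simp_all add: A_def)
  have r0: "u (j+2) = lm * u (j+1) - u j" by (rule useq_rec)
  have r1: "u (Suc j + 2) = lm * u (Suc j + 1) - u (Suc j)" by (rule useq_rec)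
  have "A (Suc (Suc j)) = lm * (u (j+2) * y - u (j+1) * x) - (u (j+1) * y - u j * x)"
    using H B1 IH by simp
  also have "\<dots> = (lm * u (j+2) - u (j+1)) * y - (lm * u (j+1) - u j) * x"
    by (simp add: algebra_simps)
  also have "\<dots> = u (Suc j + 2) * y - u (Suc j + 1) * x"
    using r0 r1 by simp
  finally show ?case using IH by (simp add: A_def)
qed

lemma iterU_Lam: "v \<in> Lam q \<Longrightarrow> (((*v) (Uinvm q)) ^^ j) v \<in> Lam q"
  by (induction j) (simp_all add: Lam_mult[OF Uinv_Hecke])

lemma D_NN: "vec2 x y \<in> Lam q \<Longrightarrow> u (j+1) * y - u j * x = 0 \<or> 1 \<le> \<bar>u (j+1) * y - u j * x\<bar>"
  using Lam_coord(2)[OF iterU_Lam[of "vec2 x y" j]] iterU[of j x y] by simp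

lemma decomp: "a * x + b * y = (u (j+1) * x - u (j+2) * y) * ff q a b j + (u (j+1) * y - u j * x) * ff q a b (j+1)"
proof -
  have c: "(u (j+1))^2 - u j * u (j+2) = 1" by (rule cassini)
  have "(u (j+1) * x - u (j+2) * y) * ff q a b j + (u (j+1) * y - u j * x) * ff q a b (j+1)
        = (a * x + b * y) * ((u (j+1))^2 - u j * u (j+2))"
    by (simp add: ff_def power2_eq_square algebra_simps)
  thus ?thesis using c by simp
qed

lemma min_slope:
  assumes F: "(a,b) \<in> Farey q" and i: "2 \<le> i" "i \<le> q - 1"
    and f1: "ff q a b (i-1) > 1" and f2: "ff q a b i \<le> 1"
    and v: "vec2 x y \<in> Lam q" and P: "0 < a * x + b * y" "a * x + b * y \<le> 1" and y: "0 < y"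
  shows "u i * x \<le> u (i+1) * y"
proof -
  have a: "0 < a" "a \<le> 1" and bb: "1 - lm * a < b" using F by (auto simp: Farey_def)
  have fone: "ff q a b 1 > 1" using bb ff1[of a b] by linarith
  have fgt: "ff q a b j > 1" if "1 \<le> j" "j \<le> i - 1" for j
    using ff_gt1[OF a(1) fone _ f1] i that by simp
  have fi: "ff q a b i > 0" using ff_pos_next[OF a, of i b] i f1 by simp
  have fpos: "ff q a b j > 0" if "1 \<le> j" "j \<le> i" for j
  proof (cases "j = i")
    case True thus ?thesis using fi by simp
  next
    case False hence "j \<le> i - 1" using that by linarith
    thus ?thesis using fgt[of j] that by simp
  qed
  have "\<forall>j. j \<le> i \<longrightarrow> 0 \<le> u (j+1) * y - u j * x"
  proof (intro allI)
    fix j show "j \<le> i \<longrightarrow> 0 \<le> u (j+1) * y - u j * x"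
    proof (induction j)
      case 0 thus ?case using y by simp
    next
      case (Suc j)
      show ?case
      proof
        assume ji: "Suc j \<le> i"
        hence Dj: "0 \<le> u (j+1) * y - u j * x" using Suc by simp
        show "0 \<le> u (Suc j + 1) * y - u (Suc j) * x"
        proof (rule ccontr)
          assume "\<not> 0 \<le> u (Suc j + 1) * y - u (Suc j) * x"
          hence neg: "u (j+2) * y - u (j+1) * x < 0" by (simp add: numeral_2_eq_2)
          have "u (j+2) * y - u (j+1) * x = 0 \<or> 1 \<le> \<bar>u (j+2) * y - u (j+1) * x\<bar>"
            using D_NN[OF v, of "j+1"] by (simp add: numeral_2_eq_2)
          hence al: "1 \<le> u (j+1) * x - u (j+2) * y" using neg by auto
          define \<alpha> where "\<alpha> = u (j+1) * x - u (j+2) * y"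
          define \<beta> where "\<beta> = u (j+1) * y - u j * x"
          have dec: "a * x + b * y = \<alpha> * ff q a b j + \<beta> * ff q a b (j+1)"
            unfolding \<alpha>_def \<beta>_def by (rule decomp)
          have fj1: "ff q a b (j+1) > 0" using fpos[of "j+1"] ji by simp
          show False
          proof (cases "j = 0")
            case True
            have "\<beta> = y" using True by (simp add: \<beta>_def)
            hence b1: "1 \<le> \<beta>" using Lam_coord(2)[OF v] y by auto
            have "\<alpha> * a \<ge> 1 * a" using al a by (intro mult_right_mono) (auto simp: \<alpha>_def)
            moreover have "\<beta> * ff q a b 1 \<ge> 1 * ff q a b 1" using b1 fone by (intro mult_right_mono) auto
            ultimately have "a * x + b * y \<ge> a + ff q a b 1" using dec True by (simp add: ff0)
            thus False using P a fone by linarith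
          next
            case False
            have fj: "ff q a b j > 1" using fgt[of j] False ji by simp
            have "\<alpha> * ff q a b j \<ge> 1 * ff q a b j" using al fj by (intro mult_right_mono) (auto simp: \<alpha>_def)
            moreover have "\<beta> * ff q a b (j+1) \<ge> 0" using Dj fj1 by (simp add: \<beta>_def)
            ultimately have "a * x + b * y > 1" using dec fj by linarith
            thus False using P by simp
          qed
        qed
      qed
    qed
  qed
  thus ?thesis by auto
qed

end


context hq begin

lemma T_mem: "(a,b) \<in> Tpiece q i \<longleftrightarrow> (a,b) \<in> Farey q \<and> ff q a b (i-1) > 1 \<and> ff q a b i \<le> 1"
  by (simp add: Tpiece_def pdot_wv)

lemma T_nonempty: assumes i: "2 \<le> i" "i \<le> q - 1" shows "Tpiece q i \<noteq> {}"
proof -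
  have ui: "1 \<le> u i" using u_ge1 i by simp
  have ui1: "0 \<le> u (i+1)" using u_nonneg i by simp
  have dif: "u i - u (i-1) < 1" using u_diff1 i by simp
  have c: "(u i)^2 - u (i-1) * u (i+1) = 1" using cass i by simp
  have r: "u (i+1) = lm * u i - u (i-1)" using u_rec1 i by simp
  define \<beta> where "\<beta> = (1 - u (i+1)) / u i"
  have bu: "\<beta> * u i = 1 - u (i+1)" using ui by (simp add: \<beta>_def)
  have f2: "ff q 1 \<beta> i = 1" using bu by (simp add: ff_def)
  have "u i * ff q 1 \<beta> (i-1) = (u i)^2 + \<beta> * u i * u (i-1)"
    using i by (simp add: ff_def power2_eq_square algebra_simps)
  also have "\<dots> = 1 + u (i-1)"
  proof -
    have e: "\<beta> * u i * u (i-1) = (1 - u (i+1)) * u (i-1)" using bu by simp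
    hence e': "\<beta> * u i * u (i-1) = u (i-1) - u (i+1) * u (i-1)" by (simp add: algebra_simps)
    have c': "(u i)^2 = 1 + u (i+1) * u (i-1)" using c by (simp add: mult.commute)
    show ?thesis using e' c' by linarith
  qed
  also have "\<dots> > u i * 1" using dif by simp
  finally have f1: "ff q 1 \<beta> (i-1) > 1" using ui by (simp add: mult_less_cancel_left)
  have "\<beta> * u i \<le> 1 * u i" using bu ui ui1 by simp
  hence b1: "\<beta> \<le> 1" using ui by (simp add: mult_le_cancel_right)
  have "(1 - lm) * u i < \<beta> * u i" using bu r dif by (simp add: algebra_simps)
  hence b2: "1 - lm < \<beta>" using ui by (simp add: mult_less_cancel_right)
  have "(1, \<beta>) \<in> Tpiece q i" using f1 f2 b1 b2 by (simp add: T_mem Farey_def)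
  thus ?thesis by blast
qed

lemma Farey_ff1: "(a,b) \<in> Farey q \<Longrightarrow> ff q a b 1 > 1"
  using ff1[of a b] by (auto simp: Farey_def)

lemma T_union: "(\<Union>i \<in> {2..q-1}. Tpiece q i) = Farey q"
proof
  show "(\<Union>i \<in> {2..q-1}. Tpiece q i) \<subseteq> Farey q" by (auto simp: Tpiece_def)
  show "Farey q \<subseteq> (\<Union>i \<in> {2..q-1}. Tpiece q i)"
  proof
    fix p assume p: "p \<in> Farey q"
    obtain a b where ab: "p = (a,b)" by (cases p)
    have F: "(a,b) \<in> Farey q" using p ab by simp
    define P where "P = (\<lambda>j. 2 \<le> j \<and> ff q a b j \<le> 1)"
    have Pq: "P (q-1)" unfolding P_def using q3 F ffqm1[of a b] by (auto simp: Farey_def)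
    define i where "i = (LEAST j. P j)"
    have Pi: "P i" unfolding i_def using Pq by (rule LeastI)
    have iq: "i \<le> q - 1" unfolding i_def using Pq by (rule Least_le)
    have "ff q a b (i-1) > 1"
    proof (cases "i - 1 = 1")
      case True thus ?thesis using Farey_ff1[OF F] by simp
    next
      case False
      hence "i - 1 < i" "2 \<le> i - 1" using Pi by (auto simp: P_def)
      hence "\<not> P (i-1)" unfolding i_def using not_less_Least by blast
      thus ?thesis using \<open>2 \<le> i - 1\<close> by (simp add: P_def)
    qed
    hence "(a,b) \<in> Tpiece q i" using F Pi by (simp add: T_mem P_def)
    thus "p \<in> (\<Union>i \<in> {2..q-1}. Tpiece q i)" using Pi iq ab by (auto simp: P_def)
  qed
qed

lemma T_disj_aux: assumes "i < j" "2 \<le> i" "j \<le> q - 1" shows "Tpiece q i \<inter> Tpiece q j = {}"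
proof (rule ccontr)
  assume "Tpiece q i \<inter> Tpiece q j \<noteq> {}"
  then obtain a b where ab: "(a,b) \<in> Tpiece q i" "(a,b) \<in> Tpiece q j" by auto
  have F: "(a,b) \<in> Farey q" and fi: "ff q a b i \<le> 1" and fj: "ff q a b (j-1) > 1"
    using ab by (auto simp: T_mem)
  have "0 < a" using F by (simp add: Farey_def)
  hence "ff q a b i > 1" using ff_gt1[of a b j i] Farey_ff1[OF F] assms fj by simp
  thus False using fi by simp
qed

lemma T_disj: "i \<in> {2..q-1} \<Longrightarrow> j \<in> {2..q-1} \<Longrightarrow> i \<noteq> j \<Longrightarrow> Tpiece q i \<inter> Tpiece q j = {}"
  using T_disj_aux[of i j] T_disj_aux[of j i] by (cases "i < j") (auto simp: Int_commute)

end


definition Um :: "nat \<Rightarrow> nat \<Rightarrow> real^2^2" where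
  "Um q m = mat2 (useq q (m+2)) (- useq q (m+1)) (useq q (m+1)) (- useq q m)"

lemma hmat_mulv[simp]: "hmat s *v vec2 x y = vec2 x (y - s * x)" by (simp add: hmat_def)

lemma strip_mem: "vec2 x y \<in> strip t \<longleftrightarrow> 0 < x \<and> x \<le> t" by (simp add: strip_def)
lemma slope_vec2: "slope (vec2 x y) = y / x" by (simp add: slope_def)

context hq begin

lemma Um_Hecke: "Um q m \<in> Hecke q"
proof (induction m)
  case 0
  have "Um q 0 = Umat q" by (simp add: Um_def Umat_def numeral_2_eq_2)
  thus ?case using U_Hecke by simp
next
  case (Suc m)
  have "Um q (Suc m) = Umat q ** Um q m" by (simp add: Um_def Umat_def numeral_2_eq_2 algebra_simps)
  thus ?case using Hecke_mult[OF Suc U_Hecke] by simp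
qed

lemma Lam_nz: "v \<in> Lam q \<Longrightarrow> v \<noteq> 0"
proof
  assume v: "v \<in> Lam q" and z: "v = 0"
  obtain M where M: "M \<in> Hecke q" "v = M *v vec2 1 0" using v by (auto simp: Lam_def)
  have "M *v vec2 1 0 = vec2 (M$1$1) (M$2$1)" by (subst mat2_eta[of M]) simp
  hence "M$1$1 = 0" "M$2$1 = 0" using M z by (auto simp: vec_eq_iff forall_2)
  hence "det M = 0" by (simp add: det_2)
  thus False using Hecke_det[OF M(1)] by simp
qed

lemma piece_facts:
  assumes i: "2 \<le> i" "i \<le> q - 1" and T: "(a,b) \<in> Tpiece q i"
  defines "d \<equiv> ff q a b i" and "vs \<equiv> gmat a b *v wv q i"
  shows "vs = vec2 d (u i / a)" "0 < d" "d \<le> 1" "0 < a"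
    "vs \<in> act (gmat a b) (Lam q) \<inter> strip 1"
    "0 < slope vs"
    "\<forall>z \<in> act (gmat a b) (Lam q) \<inter> strip 1. 0 < slope z \<longrightarrow> slope vs \<le> slope z"
    "slope vs = u i / (a * d)"
proof -
  have F: "(a,b) \<in> Farey q" and f1: "ff q a b (i-1) > 1" and f2: "ff q a b i \<le> 1"
    using T by (auto simp: T_mem)
  have a: "0 < a" "a \<le> 1" using F by (auto simp: Farey_def)
  show "0 < a" using a by simp
  show vs: "vs = vec2 d (u i / a)" by (simp add: vs_def d_def wv_eq ff_def)
  show d0: "0 < d" using ff_pos_next[OF a, of i b] i f1 by (simp add: d_def)
  show d1: "d \<le> 1" using f2 by (simp add: d_def)
  show "vs \<in> act (gmat a b) (Lam q) \<inter> strip 1"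
  proof -
    have "vs \<in> act (gmat a b) (Lam q)" unfolding vs_def by (rule act_memI[OF wv_Lam])
    thus ?thesis using d0 d1 vs by (simp add: strip_mem)
  qed
  have ui: "1 \<le> u i" using u_ge1 i by simp
  show sl: "slope vs = u i / (a * d)" using vs by (simp add: slope_vec2)
  show "0 < slope vs" using sl ui a d0 by simp
  show "\<forall>z \<in> act (gmat a b) (Lam q) \<inter> strip 1. 0 < slope z \<longrightarrow> slope vs \<le> slope z"
  proof (intro ballI impI)
    fix z assume z: "z \<in> act (gmat a b) (Lam q) \<inter> strip 1" and sz: "0 < slope z"
    obtain w where w: "w \<in> Lam q" "z = gmat a b *v w" using z by (auto simp: act_def)
    obtain x y where xy: "w = vec2 x y" by (rule vec2_cases)
    define P where "P = a * x + b * y"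
    have zz: "z = vec2 P (y / a)" using w xy by (simp add: P_def)
    have P: "0 < P" "P \<le> 1" using z zz by (auto simp: strip_mem)
    have "0 < (y / a) / P" using sz zz by (simp add: slope_vec2)
    hence "0 < y \<or> y < 0 \<and> a * P < 0" using P a by (simp add: zero_less_divide_iff)
    hence y: "0 < y" using P a by (auto simp: mult_less_0_iff)
    have m: "u i * x \<le> u (i+1) * y" using min_slope[OF F i f1 f2, of x y] w xy P y by (simp add: P_def)
    have "u i * P \<le> y * d"
    proof -
      have "u i * P = a * (u i * x) + b * y * u i" by (simp add: P_def algebra_simps)
      also have "\<dots> \<le> a * (u (i+1) * y) + b * y * u i" using m a by (simp add: mult_left_mono)
      also have "\<dots> = y * d" by (simp add: d_def ff_def algebra_simps)
      finally show ?thesis .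
    qed
    hence "u i / (a * d) \<le> y / (a * P)" using a d0 P by (simp add: divide_le_eq le_divide_eq field_simps)
    thus "slope vs \<le> slope z" using sl zz by (simp add: slope_vec2)
  qed
qed

end


lemma det_hmat: "det (hmat s) = 1" by (simp add: hmat_def)
lemma det_gmat: "a \<noteq> 0 \<Longrightarrow> det (gmat a b) = 1" by (simp add: gmat_def)

lemma norm_vec2_0: "norm (vec2 x 0) = \<bar>x\<bar>" by (simp add: norm_vec2)

context hq begin

lemma Rq_piece:
  assumes i: "2 \<le> i" "i \<le> q - 1" and T: "(a,b) \<in> Tpiece q i"
  shows "Rq q (a,b) = slope (gmat a b *v wv q i)"
proof -
  note pf = piece_facts[OF i T]
  show ?thesis unfolding Rq_def gpt_eq fst_conv snd_conv
  proof (rule Least_equality)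
    show "\<exists>v\<in>act (gmat a b) (Lam q) \<inter> strip 1. slope v = slope (gmat a b *v wv q i) \<and> 0 < slope (gmat a b *v wv q i)"
      using pf(5,6) by blast
    show "\<And>y. \<exists>v\<in>act (gmat a b) (Lam q) \<inter> strip 1. slope v = y \<and> 0 < y \<Longrightarrow> slope (gmat a b *v wv q i) \<le> y"
      using pf(7) by blast
  qed
qed

lemma BCZ_char:
  assumes "p' \<in> Farey q" "act (hmat (Rq q p) ** gpt p) (Lam q) = act (gpt p') (Lam q)"
  shows "BCZ q p = p'"
  unfolding BCZ_def
proof (rule the_equality)
  show "p' \<in> Farey q \<and> act (hmat (Rq q p) ** gpt p) (Lam q) = act (gpt p') (Lam q)" using assms by simp
  fix p'' assume h: "p'' \<in> Farey q \<and> act (hmat (Rq q p) ** gpt p) (Lam q) = act (gpt p'') (Lam q)"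
  hence "act (gpt p'') (Lam q) = act (gpt p') (Lam q)" using assms(2) by argo
  thus "p'' = p'" using part1b[of p'' p'] assms(1) h by blast
qed

lemma piece_main:
  assumes i: "2 \<le> i" "i \<le> q - 1" and T: "(a,b) \<in> Tpiece q i"
  defines "d \<equiv> ff q a b i"
  shows "hmat (Rq q (a,b)) ** gpt (a,b) *v wv q i = vec2 d 0"
    "Rq q (a,b) = u i / (a * d)"
    "BCZ q (a,b) = (d, ff q a b (i+1) + real_of_int \<lfloor>(1 - ff q a b (i+1)) / (lm * d)\<rfloor> * lm * d)"
proof -
  note pf = piece_facts[OF i T]
  have F: "(a,b) \<in> Farey q" using T by (simp add: T_mem)
  have a: "0 < a" using pf by simp
  have d0: "0 < d" "d \<le> 1" using pf by (simp_all add: d_def)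
  define R where "R = Rq q (a,b)"
  have R: "R = u i / (a * d)" using Rq_piece[OF i T] pf(8) by (simp add: R_def d_def)
  show "Rq q (a,b) = u i / (a * d)" using R by (simp add: R_def)
  have Rd: "R * d = u i / a" using R d0 a by simp
  show "hmat (Rq q (a,b)) ** gpt (a,b) *v wv q i = vec2 d 0"
    using pf(1) Rd by (simp add: R_def[symmetric] matrix_vector_mul_assoc[symmetric] gpt_eq d_def)
  define d' where "d' = ff q a b (i-1)"
  have ii: "i - 1 + 2 = i + 1" "i - 1 + 1 = i" using i by auto
  have cas: "u i * d' - u (i-1) * d = a"
  proof -
    have "u i * d' - u (i-1) * d = a * ((u i)^2 - u (i-1) * u (i+1))"
      using i by (simp add: d_def d'_def ff_def power2_eq_square algebra_simps)
    thus ?thesis using cass[of i] i by simp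
  qed
  have M: "hmat R ** gmat a b ** Um q (i-1) = gmat d (-d')"
  proof -
    have U: "Um q (i-1) = mat2 (u (i+1)) (-u i) (u i) (-u (i-1))" using ii by (simp add: Um_def)
    have d'e: "d' = a * u i + b * u (i-1)" using ii by (simp add: d'_def ff_def)
    have de: "d = a * u (i+1) + b * u i" by (simp add: d_def ff_def)
    have G: "gmat a b ** Um q (i-1) = mat2 d (-d') (u i / a) (-u (i-1)/a)"
      unfolding U gmat_def mat2_mul d'e de by (simp add: mat2_eq_iff)
    have "hmat R ** gmat a b ** Um q (i-1) = hmat R ** (gmat a b ** Um q (i-1))"
      by (simp add: matrix_mul_assoc)
    also have "\<dots> = mat2 d (-d') (u i / a - R * d) (R * d' - u (i-1) / a)"
      unfolding G hmat_def mat2_mul by (simp add: mat2_eq_iff)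
    finally have "hmat R ** gmat a b ** Um q (i-1) =
        mat2 d (-d') (u i / a - R * d) (R * d' - u (i-1) / a)" .
    also have "\<dots> = gmat d (-d')"
    proof -
      have "R * d' - u (i-1) / a = (u i * d' - u (i-1) * d) / (a * d)" using a d0 unfolding R by (simp add: field_simps)
      also have "\<dots> = 1 / d" using cas a by simp
      finally show ?thesis using Rd by (simp add: gmat_def)
    qed
    finally show ?thesis .
  qed
  define e where "e = ff q a b (i+1)"
  have er: "e = lm * d - d'" using ff_rec[of i a b] i by (simp add: e_def d_def d'_def)
  define k where "k = \<lfloor>(1 - e) / (lm * d)\<rfloor>"
  define b2 where "b2 = e + real_of_int k * lm * d"
  have ld: "0 < lm * d" using lam1 d0 by simp
  have n1: "real_of_int k \<le> (1 - e) / (lm * d)" unfolding k_def by (rule of_int_floor_le)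
  have n2: "(1 - e) / (lm * d) < real_of_int k + 1" unfolding k_def by (rule real_of_int_floor_add_one_gt)
  have "real_of_int k * (lm * d) \<le> 1 - e" using n1 ld by (simp add: le_divide_eq)
  hence b21: "b2 \<le> 1" by (simp add: b2_def algebra_simps)
  have "1 - e < (real_of_int k + 1) * (lm * d)" using n2 ld by (simp add: divide_less_eq)
  hence b22: "1 - lm * d < b2" by (simp add: b2_def algebra_simps)
  have F2: "(d, b2) \<in> Farey q" using b21 b22 d0 by (simp add: Farey_def)
  have "act (hmat R ** gpt (a,b)) (Lam q) = act (hmat R ** gmat a b ** Um q (i-1)) (Lam q)"
    using act_mult_Lam[OF Um_Hecke, of "hmat R ** gmat a b" "i-1"] by (simp add: gpt_eq)
  also have "\<dots> = act (gmat d (-d')) (Lam q)" using M by simp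
  also have "\<dots> = act (gmat d (-d' + real_of_int (k+1) * lm * d)) (Lam q)"
    using act_g_shift[of d "-d'" "k+1"] by simp
  also have "-d' + real_of_int (k+1) * lm * d = b2" using er by (simp add: b2_def algebra_simps)
  finally have "act (hmat R ** gpt (a,b)) (Lam q) = act (gpt (d, b2)) (Lam q)" by (simp add: gpt_eq)
  hence "BCZ q (a,b) = (d, b2)" using BCZ_char F2 by (simp add: R_def)
  thus "BCZ q (a,b) = (d, ff q a b (i+1) + real_of_int \<lfloor>(1 - ff q a b (i+1)) / (lm * d)\<rfloor> * lm * d)"
    by (simp add: b2_def k_def e_def)
qed

end


context hq begin

lemma part2:
  assumes p: "p \<in> Farey q"
  shows "act (gpt p) (Lam q) \<inter> strip 1 \<noteq> {}
      \<and> (\<exists>v \<in> act (gpt p) (Lam q) \<inter> strip 1. 0 < slope v \<and>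
           (\<forall>z \<in> act (gpt p) (Lam q) \<inter> strip 1. 0 < slope z \<longrightarrow> slope v \<le> slope z))
      \<and> 0 < Rq q p
      \<and> (\<exists>v \<in> act (hmat (Rq q p) ** gpt p) (Lam q). v $ 2 = 0 \<and> norm v \<le> 1)
      \<and> (\<forall>s. 0 < s \<and> s < Rq q p \<longrightarrow>
           \<not> (\<exists>v \<in> act (hmat s ** gpt p) (Lam q). v $ 2 = 0 \<and> norm v \<le> 1))
      \<and> (\<exists>!p'. p' \<in> Farey q \<and> act (hmat (Rq q p) ** gpt p) (Lam q) = act (gpt p') (Lam q))
      \<and> BCZ q p \<in> Farey q
      \<and> act (hmat (Rq q p) ** gpt p) (Lam q) = act (gpt (BCZ q p)) (Lam q)"
proof -
  obtain a b where ab: "p = (a,b)" by (cases p)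
  have "(a,b) \<in> (\<Union>i \<in> {2..q-1}. Tpiece q i)" using T_union p ab by simp
  then obtain i where i: "2 \<le> i" "i \<le> q - 1" and T: "(a,b) \<in> Tpiece q i" by auto
  note pf = piece_facts[OF i T]
  note pm = piece_main[OF i T]
  define d where "d = ff q a b i"
  define vs where "vs = gmat a b *v wv q i"
  have a: "0 < a" using pf by simp
  have d: "0 < d" "d \<le> 1" using pf by (simp_all add: d_def)
  have R: "Rq q p = slope vs" using Rq_piece[OF i T] ab by (simp add: vs_def)
  have vsm: "vs \<in> act (gpt p) (Lam q) \<inter> strip 1" using pf(5) ab by (simp add: vs_def gpt_eq)
  have vpos: "0 < slope vs" using pf(6) by (simp add: vs_def)
  have vmin: "\<forall>z \<in> act (gpt p) (Lam q) \<inter> strip 1. 0 < slope z \<longrightarrow> slope vs \<le> slope z"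
    using pf(7) ab by (simp add: vs_def gpt_eq)
  have hor: "hmat (Rq q p) ** gpt p *v wv q i = vec2 d 0" using pm(1) ab by (simp add: d_def)
  have horm: "vec2 d 0 \<in> act (hmat (Rq q p) ** gpt p) (Lam q)"
    using act_memI[OF wv_Lam[of q i], of "hmat (Rq q p) ** gpt p"] hor by simp
  have nosm: "\<not> (\<exists>v \<in> act (hmat s ** gpt p) (Lam q). v $ 2 = 0 \<and> norm v \<le> 1)"
    if s: "0 < s" "s < Rq q p" for s
  proof
    assume "\<exists>v \<in> act (hmat s ** gpt p) (Lam q). v $ 2 = 0 \<and> norm v \<le> 1"
    then obtain v where v: "v \<in> act (hmat s ** gpt p) (Lam q)" "v $ 2 = 0" "norm v \<le> 1" by blast
    obtain w where w: "w \<in> Lam q" "v = hmat s ** gmat a b *v w" using v ab by (auto simp: act_def gpt_eq)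
    obtain x y where xy: "w = vec2 x y" by (rule vec2_cases)
    define X where "X = a * x + b * y"
    define Y where "Y = y / a"
    have z: "gmat a b *v w = vec2 X Y" using xy by (simp add: X_def Y_def)
    have vv: "v = vec2 X (Y - s * X)" using w z by (simp add: matrix_vector_mul_assoc[symmetric])
    have YX: "Y = s * X" using v(2) vv by simp
    have nX: "\<bar>X\<bar> \<le> 1" using v(3) vv YX by (simp add: norm_vec2_0)
    have X0: "X \<noteq> 0"
    proof
      assume "X = 0"
      hence "Y = 0" using YX by simp
      hence "y = 0" using a by (simp add: Y_def)
      hence "x = 0" using \<open>X = 0\<close> a by (simp add: X_def)
      thus False using Lam_nz[OF w(1)] xy \<open>y = 0\<close> by (simp add: vec_eq_iff forall_2)
    qed
    have sl: "slope (vec2 X Y) = s" "slope (vec2 (-X) (-Y)) = s" using YX X0 by (simp_all add: slope_vec2)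
    show False
    proof (cases "X > 0")
      case True
      have "vec2 X Y \<in> act (gpt p) (Lam q) \<inter> strip 1"
        using act_memI[OF w(1), of "gmat a b"] z True nX ab by (simp add: gpt_eq strip_mem)
      from vmin[rule_format, OF this] have "slope vs \<le> s" using sl s by simp
      thus False using s R by simp
    next
      case False
      hence Xn: "X < 0" using X0 by simp
      have "gmat a b *v (-w) = vec2 (-X) (-Y)" using xy by (simp add: X_def Y_def)
      hence "vec2 (-X) (-Y) \<in> act (gpt p) (Lam q) \<inter> strip 1"
        using act_memI[OF neg_Lam[OF w(1)], of "gmat a b"] Xn nX ab by (simp add: gpt_eq strip_mem)
      from vmin[rule_format, OF this] have "slope vs \<le> s" using sl s by simp
      thus False using s R by simp
    qed
  qed
  have detA: "det (hmat (Rq q p) ** gpt p) = 1" using a ab by (simp add: det_mul det_hmat det_gmat gpt_eq)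
  have ex1: "\<exists>!p'. p' \<in> Farey q \<and> act (hmat (Rq q p) ** gpt p) (Lam q) = act (gpt p') (Lam q)"
    using part1[OF detA d horm] by blast
  have bcz: "BCZ q p \<in> Farey q \<and> act (hmat (Rq q p) ** gpt p) (Lam q) = act (gpt (BCZ q p)) (Lam q)"
    unfolding BCZ_def by (rule theI'[OF ex1])
  have hn: "\<exists>v \<in> act (hmat (Rq q p) ** gpt p) (Lam q). v $ 2 = 0 \<and> norm v \<le> 1"
    using horm d by (intro bexI[of _ "vec2 d 0"]) (simp_all add: norm_vec2_0)
  have ne: "act (gpt p) (Lam q) \<inter> strip 1 \<noteq> {}" using vsm by blast
  have exm: "\<exists>v \<in> act (gpt p) (Lam q) \<inter> strip 1. 0 < slope v \<and>
           (\<forall>z \<in> act (gpt p) (Lam q) \<inter> strip 1. 0 < slope z \<longrightarrow> slope v \<le> slope z)"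
    using vsm vpos vmin by (intro bexI[of _ vs]) auto
  have "0 < Rq q p" using R vpos by simp
  thus ?thesis using ne exm hn nosm ex1 bcz by (intro conjI) auto
qed
end


theorem mainTheorem5:
  fixes q :: nat
  assumes "q \<ge> 3"
  shows
    \<comment> \<open>(1)\<close>
    "(\<forall>(A :: real^2^2) c. det A = 1 \<and> 0 < c \<and> c \<le> 1 \<and> vec2 c 0 \<in> act A (Lam q) \<longrightarrow>
        (\<exists>!p. p \<in> Farey q \<and> act A (Lam q) = act (gpt p) (Lam q)) \<and>
        (\<forall>p \<in> Farey q. act A (Lam q) = act (gpt p) (Lam q) \<longrightarrow> fst p = c))
   \<and> (\<forall>p \<in> Farey q. \<forall>p' \<in> Farey q.
        act (gpt p) (Lam q) = act (gpt p') (Lam q) \<longrightarrow> p = p')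
    \<comment> \<open>(2)\<close>
   \<and> (\<forall>p \<in> Farey q.
        act (gpt p) (Lam q) \<inter> strip 1 \<noteq> {}
      \<and> (\<exists>v \<in> act (gpt p) (Lam q) \<inter> strip 1. 0 < slope v \<and>
           (\<forall>u \<in> act (gpt p) (Lam q) \<inter> strip 1. 0 < slope u \<longrightarrow> slope v \<le> slope u))
      \<and> 0 < Rq q p
      \<and> (\<exists>v \<in> act (hmat (Rq q p) ** gpt p) (Lam q). v $ 2 = 0 \<and> norm v \<le> 1)
      \<and> (\<forall>s. 0 < s \<and> s < Rq q p \<longrightarrow>
           \<not> (\<exists>v \<in> act (hmat s ** gpt p) (Lam q). v $ 2 = 0 \<and> norm v \<le> 1))
      \<and> (\<exists>!p'. p' \<in> Farey q \<and> act (hmat (Rq q p) ** gpt p) (Lam q) = act (gpt p') (Lam q))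
      \<and> BCZ q p \<in> Farey q
      \<and> act (hmat (Rq q p) ** gpt p) (Lam q) = act (gpt (BCZ q p)) (Lam q))
    \<comment> \<open>(3)\<close>
   \<and> (\<forall>i \<in> {2..q-1}. Tpiece q i \<noteq> {})
   \<and> (\<Union>i \<in> {2..q-1}. Tpiece q i) = Farey q
   \<and> (\<forall>i \<in> {2..q-1}. \<forall>j \<in> {2..q-1}. i \<noteq> j \<longrightarrow> Tpiece q i \<inter> Tpiece q j = {})
   \<and> (\<forall>i \<in> {2..q-1}. \<forall>p \<in> Tpiece q i.
        gpt p *v wv q i \<in> act (gpt p) (Lam q) \<inter> strip 1
      \<and> 0 < slope (gpt p *v wv q i)
      \<and> (\<forall>u \<in> act (gpt p) (Lam q) \<inter> strip 1. 0 < slope u \<longrightarrow> slope (gpt p *v wv q i) \<le> slope u)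
      \<and> Rq q p = (wv q i $ 2) / (fst p * pdot p (wv q i))
      \<and> BCZ q p = (pdot p (wv q i),
                   pdot p (wv q (i + 1)) + real_of_int (kq q i p) * lam q * pdot p (wv q i)))"
proof -
  interpret hq q using assms by unfold_locales
  have A1: "\<forall>(A :: real^2^2) c. det A = 1 \<and> 0 < c \<and> c \<le> 1 \<and> vec2 c 0 \<in> act A (Lam q) \<longrightarrow>
        (\<exists>!p. p \<in> Farey q \<and> act A (Lam q) = act (gpt p) (Lam q)) \<and>
        (\<forall>p \<in> Farey q. act A (Lam q) = act (gpt p) (Lam q) \<longrightarrow> fst p = c)"
    using part1 by blast
  have A2: "\<forall>p \<in> Farey q. \<forall>p' \<in> Farey q.
        act (gpt p) (Lam q) = act (gpt p') (Lam q) \<longrightarrow> p = p'"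
    using part1b by blast
  have A3: "\<forall>i \<in> {2..q-1}. Tpiece q i \<noteq> {}" using T_nonempty by auto
  have A4: "\<forall>i \<in> {2..q-1}. \<forall>j \<in> {2..q-1}. i \<noteq> j \<longrightarrow> Tpiece q i \<inter> Tpiece q j = {}"
    using T_disj by blast
  have A5: "gpt p *v wv q i \<in> act (gpt p) (Lam q) \<inter> strip 1
      \<and> 0 < slope (gpt p *v wv q i)
      \<and> (\<forall>z \<in> act (gpt p) (Lam q) \<inter> strip 1. 0 < slope z \<longrightarrow> slope (gpt p *v wv q i) \<le> slope z)
      \<and> Rq q p = (wv q i $ 2) / (fst p * pdot p (wv q i))
      \<and> BCZ q p = (pdot p (wv q i),
                   pdot p (wv q (i + 1)) + real_of_int (kq q i p) * lam q * pdot p (wv q i))"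
    if i: "i \<in> {2..q-1}" and T: "p \<in> Tpiece q i" for i p
  proof -
    obtain a b where ab: "p = (a,b)" by (cases p)
    have i2: "2 \<le> i" "i \<le> q - 1" using i by auto
    have T': "(a,b) \<in> Tpiece q i" using T ab by simp
    note pf = piece_facts[OF i2 T']
    note pm = piece_main[OF i2 T']
    have r: "Rq q p = (wv q i $ 2) / (fst p * pdot p (wv q i))"
    proof -
      have "wv q i $ 2 = u i" by (simp add: wv_eq)
      thus ?thesis using pm(2) ab by (simp add: pdot_wv)
    qed
    have bz: "BCZ q p = (pdot p (wv q i),
                   pdot p (wv q (i + 1)) + real_of_int (kq q i p) * lam q * pdot p (wv q i))"
    proof -
      have e1: "pdot p (wv q (i+1)) = ff q a b (i+1)" unfolding ab by (rule pdot_wv)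
      have e0: "pdot p (wv q i) = ff q a b i" unfolding ab by (rule pdot_wv)
      show ?thesis unfolding kq_def e1 e0 using pm(3) ab by simp
    qed
    show ?thesis using pf(5,6,7) r bz ab by (simp add: gpt_eq)
  qed
  have A2': "\<forall>p \<in> Farey q.
        act (gpt p) (Lam q) \<inter> strip 1 \<noteq> {}
      \<and> (\<exists>v \<in> act (gpt p) (Lam q) \<inter> strip 1. 0 < slope v \<and>
           (\<forall>z \<in> act (gpt p) (Lam q) \<inter> strip 1. 0 < slope z \<longrightarrow> slope v \<le> slope z))
      \<and> 0 < Rq q p
      \<and> (\<exists>v \<in> act (hmat (Rq q p) ** gpt p) (Lam q). v $ 2 = 0 \<and> norm v \<le> 1)
      \<and> (\<forall>s. 0 < s \<and> s < Rq q p \<longrightarrow>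
           \<not> (\<exists>v \<in> act (hmat s ** gpt p) (Lam q). v $ 2 = 0 \<and> norm v \<le> 1))
      \<and> (\<exists>!p'. p' \<in> Farey q \<and> act (hmat (Rq q p) ** gpt p) (Lam q) = act (gpt p') (Lam q))
      \<and> BCZ q p \<in> Farey q
      \<and> act (hmat (Rq q p) ** gpt p) (Lam q) = act (gpt (BCZ q p)) (Lam q)"
    using part2 by (intro ballI)
  have A5': "\<forall>i \<in> {2..q-1}. \<forall>p \<in> Tpiece q i.
        gpt p *v wv q i \<in> act (gpt p) (Lam q) \<inter> strip 1
      \<and> 0 < slope (gpt p *v wv q i)
      \<and> (\<forall>z \<in> act (gpt p) (Lam q) \<inter> strip 1. 0 < slope z \<longrightarrow> slope (gpt p *v wv q i) \<le> slope z)
      \<and> Rq q p = (wv q i $ 2) / (fst p * pdot p (wv q i))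
      \<and> BCZ q p = (pdot p (wv q i),
                   pdot p (wv q (i + 1)) + real_of_int (kq q i p) * lam q * pdot p (wv q i))"
    using A5 by (intro ballI)
  show ?thesis
    apply (intro conjI)
          apply (rule A1)
         apply (rule A2)
        apply (rule A2')
       apply (rule A3)
      apply (rule T_union)
     apply (rule A4)
    apply (rule A5')
    done
qed


end
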